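(* Let $k\geq 4$ and let $G$ be a diregular $(2,k,+3)$-digraph. Let $u,v$ be distinct vertices with exactly one common out-neighbour $u_2$, and write $N^+(u)=\{u_1,u_2\}$, $N^+(v)=\{v_1,u_2\}$. Then $v_1\in O(u)$, $u_1\in O(v)$, and $|O(u)\cap N^+(v_1)|=|O(v)\cap N^+(u_1)|=1$.
   Context: A digraph is $k$-geodetic if for every ordered pair of vertices $x,y$ there is at most one directed path from $x$ to $y$ of length at most $k$ (the trivial path counts). A diregular $(2,k,+3)$-digraph is a $k$-geodetic digraph of order $1+2+\dots+2^k+3$ in which every vertex has in- and out-degree $2$. $N^+(x)$ is the set of out-neighbours of $x$. $d(x,y)$ is the directed distance; $O(x)=\{y: d(x,y)\geq k+1\}$ is the outlier set of $x$. *)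

theory Defs
  imports Main "HOL-Library.Extended_Nat"
begin

definition out_nbrs :: "('a \<Rightarrow> 'a \<Rightarrow> bool) \<Rightarrow> 'a \<Rightarrow> 'a set" where
  "out_nbrs A x = {y. A x y}"

definition in_nbrs :: "('a \<Rightarrow> 'a \<Rightarrow> bool) \<Rightarrow> 'a \<Rightarrow> 'a set" where
  "in_nbrs A x = {y. A y x}"

text \<open>A directed path (walk) given as its vertex list; its length is the number of arcs.\<close>
definition is_path :: "'a set \<Rightarrow> ('a \<Rightarrow> 'a \<Rightarrow> bool) \<Rightarrow> 'a list \<Rightarrow> 'a \<Rightarrow> 'a \<Rightarrow> bool" where
  "is_path V A p x y \<longleftrightarrow> p \<noteq> [] \<and> hd p = x \<and> last p = y \<and> set p \<subseteq> V \<and>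
     (\<forall>i. Suc i < length p \<longrightarrow> A (p ! i) (p ! Suc i))"

definition path_len :: "'a list \<Rightarrow> nat" where
  "path_len p = length p - 1"

definition k_geodetic :: "'a set \<Rightarrow> ('a \<Rightarrow> 'a \<Rightarrow> bool) \<Rightarrow> nat \<Rightarrow> bool" where
  "k_geodetic V A k \<longleftrightarrow> (\<forall>x\<in>V. \<forall>y\<in>V. \<forall>p q.
      is_path V A p x y \<and> path_len p \<le> k \<and> is_path V A q x y \<and> path_len q \<le> k \<longrightarrow> p = q)"

definition dist :: "'a set \<Rightarrow> ('a \<Rightarrow> 'a \<Rightarrow> bool) \<Rightarrow> 'a \<Rightarrow> 'a \<Rightarrow> enat" where
  "dist V A x y = (if \<exists>p. is_path V A p x y
     then enat (LEAST n. \<exists>p. is_path V A p x y \<and> path_len p = n) else \<infinity>)"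

definition outlier_set :: "'a set \<Rightarrow> ('a \<Rightarrow> 'a \<Rightarrow> bool) \<Rightarrow> nat \<Rightarrow> 'a \<Rightarrow> 'a set" where
  "outlier_set V A k x = {y \<in> V. dist V A x y \<ge> enat (k + 1)}"

definition diregular_2k3 :: "'a set \<Rightarrow> ('a \<Rightarrow> 'a \<Rightarrow> bool) \<Rightarrow> nat \<Rightarrow> bool" where
  "diregular_2k3 V A k \<longleftrightarrow> finite V \<and>
     (\<forall>x y. A x y \<longrightarrow> x \<in> V \<and> y \<in> V) \<and>
     (\<forall>x\<in>V. card (out_nbrs A x) = 2 \<and> card (in_nbrs A x) = 2) \<and>
     k_geodetic V A k \<and>
     card V = (\<Sum>i\<le>k. 2 ^ i) + 3"

end

theory Submission
  imports Defs
begin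


fun wlk :: "'a set \<Rightarrow> ('a \<Rightarrow> 'a \<Rightarrow> bool) \<Rightarrow> nat \<Rightarrow> 'a \<Rightarrow> 'a \<Rightarrow> bool" where
  "wlk V A 0 x y = (x = y \<and> x \<in> V)"
| "wlk V A (Suc n) x z = (x \<in> V \<and> (\<exists>y. A x y \<and> wlk V A n y z))"

lemma is_path_single: "is_path V A [x] x' y \<longleftrightarrow> x' = x \<and> y = x \<and> x \<in> V"
  by (auto simp: is_path_def)

lemma is_path_Cons2: "is_path V A (x # a # q) x' y \<longleftrightarrow> x' = x \<and> x \<in> V \<and> A x a \<and> is_path V A (a # q) a y"
proof
  assume h: "is_path V A (x # a # q) x' y"
  have "A ((x # a # q) ! 0) ((x # a # q) ! Suc 0)" using h unfolding is_path_def by (metis length_Cons zero_less_Suc Suc_less_eq)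
  moreover have "\<forall>i. Suc i < length (a # q) \<longrightarrow> A ((a # q) ! i) ((a # q) ! Suc i)"
  proof (intro allI impI)
    fix i assume "Suc i < length (a # q)"
    then have "Suc (Suc i) < length (x # a # q)" by simp
    then show "A ((a # q) ! i) ((a # q) ! Suc i)" using h unfolding is_path_def by fastforce
  qed
  ultimately show "x' = x \<and> x \<in> V \<and> A x a \<and> is_path V A (a # q) a y" using h unfolding is_path_def by auto
next
  assume h: "x' = x \<and> x \<in> V \<and> A x a \<and> is_path V A (a # q) a y"
  show "is_path V A (x # a # q) x' y" unfolding is_path_def
  proof (intro conjI allI impI)
    fix i assume i: "Suc i < length (x # a # q)"
    show "A ((x # a # q) ! i) ((x # a # q) ! Suc i)"
    proof (cases i)
      case 0 then show ?thesis using h by simp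
    next
      case (Suc j)
      then have "Suc j < length (a # q)" using i by simp
      then show ?thesis using h Suc unfolding is_path_def by simp
    qed
  qed (use h in \<open>auto simp: is_path_def\<close>)
qed

lemma path_wlk: "is_path V A p x y \<Longrightarrow> wlk V A (path_len p) x y"
proof (induction p arbitrary: x)
  case Nil then show ?case by (simp add: is_path_def)
next
  case (Cons a p)
  show ?case
  proof (cases p)
    case Nil then show ?thesis using Cons.prems by (auto simp: is_path_single path_len_def)
  next
    case (Cons b q)
    then have h: "x = a" "a \<in> V" "A a b" "is_path V A (b # q) b y" using Cons.prems by (auto simp: is_path_Cons2)
    have "wlk V A (path_len (b # q)) b y" using Cons.IH h(4) Cons by simp
    then show ?thesis using h Cons by (auto simp: path_len_def)
  qed
qed

lemma wlk_path: "wlk V A n x y \<Longrightarrow> \<exists>p. is_path V A p x y \<and> path_len p = n"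
proof (induction n arbitrary: x)
  case 0 then show ?case by (intro exI[of _ "[x]"]) (auto simp: is_path_single path_len_def)
next
  case (Suc n)
  then obtain a where a: "x \<in> V" "A x a" "wlk V A n a y" by auto
  then obtain p where p: "is_path V A p a y" "path_len p = n" using Suc.IH by blast
  then obtain q where q: "p = a # q" unfolding is_path_def by (cases p) auto
  show ?case
    by (intro exI[of _ "x # p"]) (use a p q in \<open>auto simp: is_path_Cons2 path_len_def\<close>)
qed

lemma wlk_V: "wlk V A n x y \<Longrightarrow> x \<in> V \<and> y \<in> V"
  by (induction n arbitrary: x) auto

lemma path_snoc: "is_path V A p x a \<Longrightarrow> A a y \<Longrightarrow> y \<in> V \<Longrightarrow> is_path V A (p @ [y]) x y"
proof (induction p arbitrary: x)
  case Nil then show ?case by (simp add: is_path_def)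
next
  case (Cons b p)
  show ?case
  proof (cases p)
    case Nil then show ?thesis using Cons.prems by (auto simp: is_path_single is_path_Cons2)
  next
    case (Cons c q)
    then have h: "x = b" "b \<in> V" "A b c" "is_path V A (c # q) c a" using Cons.prems by (auto simp: is_path_Cons2)
    have "is_path V A ((c # q) @ [y]) c y" using Cons.IH h(4) Cons Cons.prems by simp
    then show ?thesis using h Cons by (simp add: is_path_Cons2)
  qed
qed

lemma wlk_add: "wlk V A m x y \<Longrightarrow> wlk V A n y z \<Longrightarrow> wlk V A (m + n) x z"
  by (induction m arbitrary: x) auto

lemma wlk_snoc:
  assumes arcV: "\<And>x y. A x y \<Longrightarrow> x \<in> V \<and> y \<in> V"
  shows "wlk V A (Suc n) x z = (\<exists>y. wlk V A n x y \<and> A y z)"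
proof (induction n arbitrary: x)
  case 0 then show ?case using arcV by auto
next
  case (Suc n)
  have "wlk V A (Suc (Suc n)) x z = (x \<in> V \<and> (\<exists>y. A x y \<and> wlk V A (Suc n) y z))" by simp
  also have "\<dots> = (x \<in> V \<and> (\<exists>y. A x y \<and> (\<exists>w. wlk V A n y w \<and> A w z)))" using Suc by simp
  also have "\<dots> = (\<exists>w. wlk V A (Suc n) x w \<and> A w z)" by auto
  finally show ?case .
qed

lemma wlk_rev:
  assumes arcV: "\<And>x y. A x y \<Longrightarrow> x \<in> V \<and> y \<in> V"
  shows "wlk V (\<lambda>x y. A y x) n x y = wlk V A n y x"
proof (induction n arbitrary: x y)
  case 0 then show ?case by auto
next
  case (Suc n)
  have "wlk V (\<lambda>x y. A y x) (Suc n) x z = (x \<in> V \<and> (\<exists>y. A y x \<and> wlk V A n z y))" for z using Suc by simp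
  moreover have "wlk V A (Suc n) z x = (\<exists>y. wlk V A n z y \<and> A y x)" for z using wlk_snoc[OF arcV] by blast
  ultimately show ?case using arcV by blast
qed



locale G =
  fixes V :: "'a set" and A :: "'a \<Rightarrow> 'a \<Rightarrow> bool" and k :: nat
  assumes fin: "finite V"
  and arcV: "\<And>x y. A x y \<Longrightarrow> x \<in> V \<and> y \<in> V"
  and outd: "\<And>x. x \<in> V \<Longrightarrow> card {y. A x y} = 2"
  and ind: "\<And>x. x \<in> V \<Longrightarrow> card {y. A y x} = 2"
  and cardV: "card V = (\<Sum>i\<le>k. 2^i) + 3"
  and k4: "4 \<le> k"
  and geo_len: "\<And>m n x y. wlk V A m x y \<Longrightarrow> wlk V A n x y \<Longrightarrow> m \<le> k \<Longrightarrow> n \<le> k \<Longrightarrow> m = n"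
  and geo_first: "\<And>x a b m n y. A x a \<Longrightarrow> A x b \<Longrightarrow> wlk V A m a y \<Longrightarrow> wlk V A n b y \<Longrightarrow> m < k \<Longrightarrow> n < k \<Longrightarrow> a = b"
  and geo_last: "\<And>x a b m n y. A a y \<Longrightarrow> A b y \<Longrightarrow> wlk V A m x a \<Longrightarrow> wlk V A n x b \<Longrightarrow> m < k \<Longrightarrow> n < k \<Longrightarrow> a = b"
begin

abbreviation W where "W n x y \<equiv> wlk V A n x y"

definition R where "R j x = {y. \<exists>i\<le>j. W i x y}"
definition Out where "Out x = {y \<in> V. \<not> (\<exists>i\<le>k. W i x y)}"
definition OutIn where "OutIn x = {y \<in> V. \<not> (\<exists>i\<le>k. W i y x)}"

lemma W1: "W 1 x y \<longleftrightarrow> A x y"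
  using arcV by auto

lemma Wcons: "A x y \<Longrightarrow> W n y z \<Longrightarrow> W (Suc n) x z"
  using arcV by auto

lemma Wsnoc: "W n x y \<Longrightarrow> A y z \<Longrightarrow> W (Suc n) x z"
  using wlk_snoc[of A V, OF arcV] by blast

lemma Wsnoc_iff: "W (Suc n) x z \<longleftrightarrow> (\<exists>y. W n x y \<and> A y z)"
  using wlk_snoc[of A V, OF arcV] by blast

lemma nocyc: "W n x x \<Longrightarrow> 1 \<le> n \<Longrightarrow> n \<le> k \<Longrightarrow> False"
  using geo_len[of n x x 0] wlk_V[of V A n x x] by auto

lemma finN: "finite {y. A x y}"
  using fin arcV by (metis (mono_tags, lifting) mem_Collect_eq rev_finite_subset subsetI)

lemma lay_card: "j \<le> k \<Longrightarrow> x \<in> V \<Longrightarrow> card {y. W j x y} = 2^j"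
proof (induction j arbitrary: x)
  case 0 then show ?case by simp
next
  case (Suc j)
  have eq: "{y. W (Suc j) x y} = (\<Union>a\<in>{a. A x a}. {y. W j a y})" using Suc.prems by auto
  have "card (\<Union>a\<in>{a. A x a}. {y. W j a y}) = (\<Sum>a\<in>{a. A x a}. card {y. W j a y})"
  proof (rule card_UN_disjoint)
    show "finite {a. A x a}" by (rule finN)
    show "\<forall>i\<in>{a. A x a}. finite {y. W j i y}"
      using fin wlk_V by (metis (mono_tags, lifting) mem_Collect_eq rev_finite_subset subsetI)
    show "\<forall>i\<in>{a. A x a}. \<forall>j'\<in>{a. A x a}. i \<noteq> j' \<longrightarrow> {y. W j i y} \<inter> {y. W j j' y} = {}"
      using geo_first Suc.prems by fastforce
  qed
  also have "\<dots> = (\<Sum>a\<in>{a. A x a}. 2^j)"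
    using Suc.IH Suc.prems arcV by (intro sum.cong) auto
  also have "\<dots> = 2 * 2^j" using outd[OF Suc.prems(2)] by simp
  finally show ?case using eq by simp
qed

lemma finW: "finite {y. W j x y}"
  using fin wlk_V by (metis (mono_tags, lifting) mem_Collect_eq rev_finite_subset subsetI)

lemma R_card: "x \<in> V \<Longrightarrow> card (R k x) = (\<Sum>i\<le>k. 2^i)"
proof -
  assume xV: "x \<in> V"
  have eq: "R k x = (\<Union>i\<in>{..k}. {y. W i x y})" unfolding R_def by auto
  have "card (\<Union>i\<in>{..k}. {y. W i x y}) = (\<Sum>i\<in>{..k}. card {y. W i x y})"
    by (rule card_UN_disjoint) (use finW geo_len in auto)
  also have "\<dots> = (\<Sum>i\<le>k. 2^i)" using lay_card xV by (intro sum.cong) auto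
  finally show ?thesis using eq by simp
qed

lemma Out_card: "x \<in> V \<Longrightarrow> card (Out x) = 3"
proof -
  assume xV: "x \<in> V"
  have "Out x = V - R k x" unfolding Out_def R_def by auto
  moreover have "R k x \<subseteq> V" unfolding R_def using wlk_V by fastforce
  ultimately have "card (Out x) = card V - card (R k x)" using fin by (simp add: card_Diff_subset finite_subset)
  then show ?thesis using R_card[OF xV] cardV by simp
qed

lemma finOut: "finite (Out x)" unfolding Out_def using fin by simp

end

lemma G_rev: "G V A k \<Longrightarrow> G V (\<lambda>x y. A y x) k"
proof -
  assume g: "G V A k"
  interpret G V A k by (rule g)
  have wr: "\<And>n x y. wlk V (\<lambda>x y. A y x) n x y = wlk V A n y x" using wlk_rev[of A V] arcV by blast
  show ?thesis
  proof
    show "finite V" by (rule fin)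
  qed (use arcV outd ind cardV k4 in auto, (simp only: wr; metis geo_len geo_last geo_first)+)
qed

context G begin

lemma OutIn_card: "x \<in> V \<Longrightarrow> card (OutIn x) = 3"
proof -
  assume xV: "x \<in> V"
  interpret r: G V "\<lambda>x y. A y x" k by (rule G_rev) (rule G_axioms)
  have wr: "\<And>n x y. wlk V (\<lambda>x y. A y x) n x y = wlk V A n y x" using wlk_rev[of A V] arcV by blast
  have "OutIn x = r.Out x" unfolding OutIn_def r.Out_def wr by simp
  then show ?thesis using r.Out_card[OF xV] by simp
qed

lemma finOutIn: "finite (OutIn x)" unfolding OutIn_def using fin by simp

lemma in_two: "A a y \<Longrightarrow> A b y \<Longrightarrow> a \<noteq> b \<Longrightarrow> A e y \<Longrightarrow> e = a \<or> e = b"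
proof -
  assume h: "A a y" "A b y" "a \<noteq> b" "A e y"
  have yV: "y \<in> V" using arcV h by blast
  have fi: "finite {z. A z y}" using fin arcV by (metis (mono_tags, lifting) mem_Collect_eq rev_finite_subset subsetI)
  have "{a, b} \<subseteq> {z. A z y}" using h by auto
  moreover have "card {a, b} = card {z. A z y}" using ind[OF yV] h by simp
  ultimately have "{a, b} = {z. A z y}" using fi by (simp add: card_subset_eq)
  then show ?thesis using h by auto
qed

lemma out_two: "A y a \<Longrightarrow> A y b \<Longrightarrow> a \<noteq> b \<Longrightarrow> {z. A y z} = {a, b}"
proof -
  assume h: "A y a" "A y b" "a \<noteq> b"
  have yV: "y \<in> V" using arcV h by blast
  have "{a, b} \<subseteq> {z. A y z}" using h by auto
  moreover have "card {a, b} = card {z. A y z}" using outd[OF yV] h by simp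
  ultimately have "{a, b} = {z. A y z}" using card_subset_eq[OF finN] by blast
  then show ?thesis by simp
qed

lemma two_elems: "card S = 2 \<Longrightarrow> \<exists>a b. a \<noteq> b \<and> S = {a, b}"
  by (metis card_2_iff)

end


locale cfg = G +
  fixes u v u1 u2 v1
  assumes uV: "u \<in> V" and vV: "v \<in> V" and uv: "u \<noteq> v"
  and Nu: "{y. A u y} = {u1, u2}" and Nv: "{y. A v y} = {v1, u2}"
  and u1v1: "u1 \<noteq> v1"
begin

lemma u12: "u1 \<noteq> u2"
proof assume "u1 = u2" then have "card {y. A u y} = 1" using Nu by simp then show False using outd[OF uV] by simp qed
lemma v12: "v1 \<noteq> u2"
proof assume "v1 = u2" then have "card {y. A v y} = 1" using Nv by simp then show False using outd[OF vV] by simp qed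
lemma Au1: "A u u1" using Nu by blast
lemma Au2: "A u u2" using Nu by blast
lemma Av1: "A v v1" using Nv by blast
lemma Av2: "A v u2" using Nv by blast
lemma u1V: "u1 \<in> V" using arcV Au1 by blast
lemma u2V: "u2 \<in> V" using arcV Au2 by blast
lemma v1V: "v1 \<in> V" using arcV Av1 by blast

lemma in_u2: "A e u2 \<Longrightarrow> e = u \<or> e = v"
  using in_two[OF Au2 Av2 uv] by simp

lemma km: "k - 1 < k" "Suc (k - 1) = k" using k4 by auto

lemma Nu_cases: "A u a \<Longrightarrow> a = u1 \<or> a = u2"
proof -
  assume "A u a" then have "a \<in> {y. A u y}" by simp
  then show ?thesis unfolding Nu by simp
qed

lemma Nv_cases: "A v a \<Longrightarrow> a = v1 \<or> a = u2"
proof -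
  assume "A v a" then have "a \<in> {y. A v y}" by simp
  then show ?thesis unfolding Nv by simp
qed

lemma inR: "W i x y \<Longrightarrow> i \<le> j \<Longrightarrow> y \<in> R j x" unfolding R_def by blast

lemma RD: "y \<in> R j x \<Longrightarrow> \<exists>i\<le>j. W i x y" unfolding R_def by simp

lemma c_Out: "y \<in> V \<Longrightarrow> y \<noteq> u \<Longrightarrow> y \<notin> R (k-1) u1 \<Longrightarrow> y \<notin> R (k-1) u2 \<Longrightarrow> y \<in> Out u"
proof -
  assume h: "y \<in> V" "y \<noteq> u" "y \<notin> R (k-1) u1" "y \<notin> R (k-1) u2"
  have "\<not> W i u y" if "i \<le> k" for i
  proof
    assume w: "W i u y"
    show False
    proof (cases i)
      case 0 then show ?thesis using w h by simp
    next
      case (Suc i')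
      then obtain a where a: "A u a" "W i' a y" using w by auto
      have "i' \<le> k - 1" using Suc that by simp
      then have "y \<in> R (k-1) a" using a(2) inR by blast
      then show ?thesis using h Nu_cases[OF a(1)] by blast
    qed
  qed
  then show ?thesis using h unfolding Out_def by blast
qed

lemma OutD: "y \<in> Out x \<Longrightarrow> W i x y \<Longrightarrow> i \<le> k \<Longrightarrow> False"
  unfolding Out_def by blast

lemma c_Out_not: "y \<in> Out u \<Longrightarrow> y \<noteq> u \<and> y \<notin> R (k-1) u1 \<and> y \<notin> R (k-1) u2"
proof -
  assume h: "y \<in> Out u"
  have "y \<noteq> u"
  proof
    assume "y = u"
    then have "W 0 u y" using uV by simp
    then show False using OutD[OF h] by blast
  qed
  moreover have "y \<notin> R (k-1) u1"
  proof
    assume "y \<in> R (k-1) u1"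
    then obtain i where i: "i \<le> k-1" "W i u1 y" using RD by blast
    have "W (Suc i) u y" using Wcons[OF Au1 i(2)] .
    moreover have "Suc i \<le> k" using i(1) k4 by simp
    ultimately show False using OutD[OF h] by blast
  qed
  moreover have "y \<notin> R (k-1) u2"
  proof
    assume "y \<in> R (k-1) u2"
    then obtain i where i: "i \<le> k-1" "W i u2 y" using RD by blast
    have "W (Suc i) u y" using Wcons[OF Au2 i(2)] .
    moreover have "Suc i \<le> k" using i(1) k4 by simp
    ultimately show False using OutD[OF h] by blast
  qed
  ultimately show ?thesis by blast
qed

lemma c_notOut: "y \<in> V \<Longrightarrow> y \<notin> Out u \<Longrightarrow> y = u \<or> y \<in> R (k-1) u1 \<or> y \<in> R (k-1) u2"
  using c_Out by blast

lemma c_disj: "y \<in> R (k-1) u1 \<Longrightarrow> y \<notin> R (k-1) u2"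
proof
  assume "y \<in> R (k-1) u1" "y \<in> R (k-1) u2"
  then obtain i j where ij: "i \<le> k-1" "W i u1 y" "j \<le> k-1" "W j u2 y" using RD by blast
  have "i < k" "j < k" using ij k4 by auto
  then have "u1 = u2" using geo_first[OF Au1 Au2 ij(2) ij(4)] by blast
  then show False using u12 by simp
qed

lemma c_uT2: "u \<notin> R (k-1) u2"
proof
  assume "u \<in> R (k-1) u2"
  then obtain i where i: "i \<le> k-1" "W i u2 u" using RD by blast
  have "W (Suc i) u u" using Wcons[OF Au2 i(2)] .
  then show False by (rule nocyc) (use i k4 in auto)
qed

lemma c_uT1: "u \<notin> R (k-1) u1"
proof
  assume "u \<in> R (k-1) u1"
  then obtain i where i: "i \<le> k-1" "W i u1 u" using RD by blast
  have "W (Suc i) u u" using Wcons[OF Au1 i(2)] .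
  then show False by (rule nocyc) (use i k4 in auto)
qed

lemma c_vT2: "y \<in> R (k-1) v1 \<Longrightarrow> y \<notin> R (k-1) u2"
proof
  assume "y \<in> R (k-1) v1" "y \<in> R (k-1) u2"
  then obtain i j where ij: "i \<le> k-1" "W i v1 y" "j \<le> k-1" "W j u2 y" using RD by blast
  have "i < k" "j < k" using ij k4 by auto
  then have "v1 = u2" using geo_first[OF Av1 Av2 ij(2) ij(4)] by blast
  then show False using v12 by simp
qed

lemma c_Z: "y \<in> V \<Longrightarrow> y \<notin> R (k-1) u2 \<Longrightarrow> (\<And>e. A e y \<Longrightarrow> e \<notin> R (k-1) u2) \<Longrightarrow> y \<in> Out u2"
proof -
  assume h: "y \<in> V" "y \<notin> R (k-1) u2" "\<And>e. A e y \<Longrightarrow> e \<notin> R (k-1) u2"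
  have "\<not> W i u2 y" if "i \<le> k" for i
  proof
    assume w: "W i u2 y"
    show False
    proof (cases i)
      case 0 then show ?thesis using w h inR[of 0 u2 y "k-1"] by simp
    next
      case (Suc i')
      then obtain e where "W i' u2 e" "A e y" using w Wsnoc_iff by blast
      moreover have "i' \<le> k - 1" using Suc that by simp
      ultimately show ?thesis using h inR by blast
    qed
  qed
  then show ?thesis using h unfolding Out_def by blast
qed

lemma c_par: "y \<in> R (k-1) u1 \<Longrightarrow> \<exists>e. A e y \<and> (e = u \<or> e \<in> R (k-1) u1)"
proof -
  assume "y \<in> R (k-1) u1"
  then obtain i where i: "i \<le> k-1" "W i u1 y" using RD by blast
  show ?thesis
  proof (cases i)
    case 0 then show ?thesis using i Au1 by auto
  next
    case (Suc i')
    then obtain e where "W i' u1 e" "A e y" using i Wsnoc_iff by blast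
    then show ?thesis using Suc i inR[of i' u1 e "k-1"] by auto
  qed
qed

lemma c_ZT1: "y \<in> R (k-1) u1 \<Longrightarrow> A ob y \<Longrightarrow> ob \<in> Out u \<Longrightarrow> y \<in> Out u2"
proof -
  assume h: "y \<in> R (k-1) u1" "A ob y" "ob \<in> Out u"
  obtain e where e: "A e y" "e = u \<or> e \<in> R (k-1) u1" using c_par[OF h(1)] by blast
  have o: "ob \<noteq> u" "ob \<notin> R (k-1) u1" "ob \<notin> R (k-1) u2" using c_Out_not[OF h(3)] by auto
  have "ob \<noteq> e" using o e by auto
  have eT2: "e \<notin> R (k-1) u2" using e c_uT2 c_disj by auto
  show ?thesis
  proof (rule c_Z)
    show "y \<in> V" using arcV h by blast
    show "y \<notin> R (k-1) u2" using c_disj h by blast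
    fix e' assume "A e' y"
    then have "e' = ob \<or> e' = e" using in_two[OF h(2) e(1) \<open>ob \<noteq> e\<close>] by blast
    then show "e' \<notin> R (k-1) u2" using o eT2 by blast
  qed
qed

end


context G begin
lemma lenne: "W m x y \<Longrightarrow> W n x y \<Longrightarrow> m \<le> k \<Longrightarrow> n \<le> k \<Longrightarrow> m \<noteq> n \<Longrightarrow> False"
  using geo_len by blast
lemma W2D: "W 2 x y \<Longrightarrow> \<exists>c. A x c \<and> A c y"
  by (auto simp: numeral_2_eq_2)
lemma W1I: "A x y \<Longrightarrow> W 1 x y" using W1 by blast
lemma W0I: "x \<in> V \<Longrightarrow> W 0 x x" by simp
end

context cfg begin

lemma u2W0: "W 0 u2 u2" using u2V by simp

lemma GC:
  assumes D1: "{y. A v1 y} \<subseteq> Out u" and D2: "Out u \<subseteq> insert x {y. A v1 y}" and nx: "\<not> W 2 v1 x"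
  shows False
proof -
  have sub: "{g. W 2 v1 g} \<subseteq> Out u2"
  proof
    fix g assume "g \<in> {g. W 2 v1 g}"
    then have g2: "W 2 v1 g" by simp
    obtain c where c: "A v1 c" "A c g" using W2D[OF g2] by blast
    have gV: "g \<in> V" using arcV c by blast
    have gT2: "g \<notin> R (k-1) u2" using c_vT2 inR[OF g2] k4 by auto
    have gu: "g \<noteq> u"
    proof
      assume gu: "g = u"
      have "W (Suc (Suc (Suc (Suc 0)))) v u2"
        using Wcons[OF Av1 Wcons[OF c(1) Wcons[OF c(2)[unfolded gu] Wcons[OF Au2 u2W0]]]] .
      then show False by (rule lenne[OF _ W1I[OF Av2]]) (use k4 in auto)
    qed
    have gO: "g \<notin> Out u"
    proof
      assume "g \<in> Out u"
      then have "g = x \<or> A v1 g" using D2 by blast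
      then show False
      proof
        assume "g = x" then show False using nx g2 by simp
      next
        assume "A v1 g" then show False by (rule lenne[OF W1I g2]) (use k4 in auto)
      qed
    qed
    have gT1: "g \<in> R (k-1) u1" using c_notOut[OF gV gO] gu gT2 by blast
    have "c \<in> Out u" using D1 c(1) by blast
    show "g \<in> Out u2" using c_ZT1[OF gT1 c(2) \<open>c \<in> Out u\<close>] .
  qed
  have "card {g. W 2 v1 g} = 4" using lay_card[of 2 v1] k4 v1V by simp
  moreover have "card {g. W 2 v1 g} \<le> card (Out u2)" using card_mono[OF finOut sub] .
  ultimately show False using Out_card[OF u2V] by simp
qed

lemma L1: "v1 \<in> Out u"
proof (rule ccontr)
  assume nO: "v1 \<notin> Out u"
  have v1u: "v1 \<noteq> u"
  proof
    assume h: "v1 = u"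
    have "W (Suc (Suc 0)) v u2" using Wcons[OF Av1 Wcons[OF Au2[folded h] u2W0]] .
    then show False by (rule lenne[OF _ W1I[OF Av2]]) (use k4 in auto)
  qed
  have "v1 \<notin> R (k-1) u2" using c_vT2 inR[OF W0I[OF v1V]] by blast
  then have "v1 \<in> R (k-1) u1" using c_notOut[OF v1V nO] v1u by blast
  then obtain s where s: "s \<le> k-1" "W s u1 v1" using RD by blast
  have s0: "s \<noteq> 0" using s u1v1 by (cases s) auto
  have vO: "v \<in> Out u"
  proof (rule c_Out)
    show "v \<in> V" by (rule vV)
    show "v \<noteq> u" using uv by simp
    show "v \<notin> R (k-1) u1"
    proof
      assume "v \<in> R (k-1) u1"
      then obtain a where a: "a \<le> k-1" "W a u1 v" using RD by blast
      show False
      proof (cases "a + 2 \<le> k")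
        case True
        have "W (Suc (Suc a)) u u2" using Wcons[OF Au1 Wsnoc[OF a(2) Av2]] .
        then show False by (rule lenne[OF _ W1I[OF Au2]]) (use True k4 in auto)
      next
        case False
        have "W (Suc a) u1 v1" using Wsnoc[OF a(2) Av1] .
        then show False by (rule lenne[OF _ s(2)]) (use False s a k4 in auto)
      qed
    qed
    show "v \<notin> R (k-1) u2"
    proof
      assume "v \<in> R (k-1) u2"
      then obtain a where a: "a \<le> k-1" "W a u2 v" using RD by blast
      have "W (Suc a) v v" using Wcons[OF Av2 a(2)] .
      then show False by (rule nocyc) (use a k4 in auto)
    qed
  qed
  define D where "D = {d. W (k-s) v1 d}"
  have cD: "card D = 2^(k-s)" unfolding D_def using lay_card v1V by simp
  have finD: "finite D" unfolding D_def by (rule finW)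
  have cOv: "card (Out u - {v}) = 2" using Out_card[OF uV] vO finOut by simp
  have Dprop: "d \<in> Out u - {v} \<or> (d = u \<and> k < k - s + 2)" if dD: "d \<in> D" for d
  proof -
    have wd: "W (k-s) v1 d" using dD unfolding D_def by simp
    have dV: "d \<in> V" using wlk_V[OF wd] by blast
    have dT1: "d \<notin> R (k-1) u1"
    proof
      assume "d \<in> R (k-1) u1"
      then obtain i where i: "i \<le> k-1" "W i u1 d" using RD by blast
      have "W (s + (k-s)) u1 d" using wlk_add[OF s(2) wd] .
      then show False by (rule lenne[OF _ i(2)]) (use i s k4 in auto)
    qed
    have dT2: "d \<notin> R (k-1) u2" using c_vT2 inR[OF wd] s0 by auto
    have dv: "d \<noteq> v"
    proof
      assume "d = v"
      then have "W (Suc (k-s)) v v" using Wcons[OF Av1 wd] by simp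
      then show False by (rule nocyc) (use s0 s k4 in auto)
    qed
    show ?thesis
    proof (cases "d = u")
      case True
      show ?thesis
      proof (rule ccontr)
        assume "\<not> ?thesis"
        then have le: "k - s + 2 \<le> k" using True by auto
        have "W (Suc (Suc (k-s))) v u2" using Wcons[OF Av1 Wsnoc[OF wd[unfolded True] Au2]] .
        then show False by (rule lenne[OF _ W1I[OF Av2]]) (use le in auto)
      qed
    next
      case False
      then show ?thesis using c_Out[OF dV False dT1 dT2] dv by blast
    qed
  qed
  show False
  proof (cases "s = 1")
    case True
    have sub: "D \<subseteq> insert u (Out u - {v})"
    proof
      fix d assume "d \<in> D"
      from Dprop[OF this] show "d \<in> insert u (Out u - {v})" by blast
    qed
    have "card D \<le> card (insert u (Out u - {v}))" by (rule card_mono) (simp_all add: finOut sub)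
    also have "\<dots> \<le> Suc (card (Out u - {v}))" by (simp add: card_insert_if finOut)
    also have "\<dots> = 3" using cOv by simp
    finally have "card D \<le> 3" .
    moreover have "(2::nat)^3 \<le> 2^(k-s)" by (rule power_increasing) (use True k4 in simp_all)
    ultimately show False using cD by simp
  next
    case False
    then have s2: "2 \<le> s" using s0 by simp
    have DO: "D \<subseteq> Out u - {v}"
    proof
      fix d assume "d \<in> D"
      from Dprop[OF this] s2 k4 show "d \<in> Out u - {v}" by auto
    qed
    have "card D \<le> card (Out u - {v})" by (rule card_mono[OF _ DO]) (simp add: finOut)
    then have "card D \<le> 2" using cOv by simp
    then have "k - s \<le> 1"
    proof -
      assume c2: "card D \<le> 2"
      show ?thesis
      proof (rule ccontr)
        assume "\<not> k - s \<le> 1"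
        then have "(2::nat)^2 \<le> 2^(k-s)" by (intro power_increasing) simp_all
        then show False using c2 cD by simp
      qed
    qed
    then have ks: "k - s = 1" using s k4 by linarith
    have DN: "D = {y. A v1 y}" unfolding D_def ks using arcV v1V by auto
    have "card D = card (Out u - {v})" using cD ks cOv by simp
    then have "D = Out u - {v}" by (intro card_subset_eq[OF _ DO]) (simp add: finOut)
    then have D2: "Out u \<subseteq> insert v {y. A v1 y}" using DN by blast
    have D1: "{y. A v1 y} \<subseteq> Out u" using DO DN by blast
    have nx: "\<not> W 2 v1 v"
    proof
      assume w2: "W 2 v1 v"
      have "W (Suc 2) v v" by (rule Wcons[OF Av1 w2])
      then show False by (rule nocyc) (use k4 in auto)
    qed
    show False using GC[OF D1 D2 nx] .
  qed
qed

lemma L2: "{y. A v1 y} \<subseteq> Out u \<Longrightarrow> False"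
proof -
  assume D1: "{y. A v1 y} \<subseteq> Out u"
  obtain c1 c2 where c: "c1 \<noteq> c2" "{y. A v1 y} = {c1, c2}" using two_elems[OF outd[OF v1V]] by blast
  have nv: "v1 \<notin> {c1, c2}"
  proof
    assume "v1 \<in> {c1, c2}"
    then have "A v1 v1" using c by blast
    then show False using nocyc[OF W1I] k4 by auto
  qed
  have sub: "insert v1 {c1, c2} \<subseteq> Out u" using D1 c L1 by blast
  have "card (insert v1 {c1, c2}) = 3" using nv c by simp
  then have "insert v1 {c1, c2} = Out u" using Out_card[OF uV] by (intro card_subset_eq[OF finOut sub]) simp
  then have D2: "Out u \<subseteq> insert v1 {y. A v1 y}" using c by blast
  have nx: "\<not> W 2 v1 v1"
  proof
    assume "W 2 v1 v1"
    then show False by (rule nocyc) (use k4 in auto)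
  qed
  show False using GC[OF D1 D2 nx] .
qed

end


context cfg begin

lemma chT1: "{y. A v1 y} \<inter> Out u = {} \<Longrightarrow> A v1 c \<Longrightarrow> c \<in> R (k-1) u1"
proof -
  assume D: "{y. A v1 y} \<inter> Out u = {}" and c: "A v1 c"
  have cV: "c \<in> V" using arcV c by blast
  have cO: "c \<notin> Out u" using D c by blast
  have cT2: "c \<notin> R (k-1) u2" using c_vT2 inR[OF W1I[OF c]] k4 by auto
  have cu: "c \<noteq> u"
  proof
    assume cu: "c = u"
    have w: "W (Suc (Suc (Suc 0))) v u2" using Wcons[OF Av1 Wcons[OF c[unfolded cu] Wcons[OF Au2 u2W0]]] .
    show False by (rule lenne[OF w W1I[OF Av2]]) (use k4 in auto)
  qed
  show ?thesis using c_notOut[OF cV cO] cu cT2 by blast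
qed

lemma chZ: "{y. A v1 y} \<inter> Out u = {} \<Longrightarrow> A v1 c \<Longrightarrow> c \<in> Out u2"
  using c_ZT1[OF chT1 _ L1] by blast

lemma K:
  assumes D: "{y. A v1 y} \<inter> Out u = {}" and c: "A v1 c"
  shows "c = u1 \<or> A u1 c"
proof -
  have v1O: "v1 \<in> Out u" by (rule L1)
  obtain s where s: "s \<le> k-1" "W s u1 c" using RD chT1[OF D c] by blast
  show ?thesis
  proof (cases "s \<le> 1")
    case True
    then show ?thesis
    proof (cases s)
      case 0 then show ?thesis using s by simp
    next
      case (Suc s')
      then have "s' = 0" using True by simp
      then show ?thesis using s Suc by auto
    qed
  next
    case False
    then have s2: "2 \<le> s" by simp
    define j where "j = k - s"
    have j1: "1 \<le> j" "j \<le> k - 2" using s s2 k4 unfolding j_def by auto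
    define E where "E = {e. W j c e}"
    have cE: "card E = 2^j" unfolding E_def using lay_card arcV c j1 by simp
    have cOv: "card (Out u - {v1}) = 2" using Out_card[OF uV] v1O finOut by simp
    have Eprop: "e \<in> Out u - {v1} \<or> (e = u \<and> k < j + 3)" if eE: "e \<in> E" for e
    proof -
      have we: "W j c e" using eE unfolding E_def by simp
      have eV: "e \<in> V" using wlk_V[OF we] by blast
      have eT1: "e \<notin> R (k-1) u1"
      proof
        assume "e \<in> R (k-1) u1"
        then obtain i where i: "i \<le> k-1" "W i u1 e" using RD by blast
        have w: "W (s + j) u1 e" using wlk_add[OF s(2) we] .
        have "s + j = k" unfolding j_def using s by simp
        show False by (rule lenne[OF w i(2)]) (use i \<open>s + j = k\<close> k4 in auto)
      qed
      have wv: "W (Suc j) v1 e" using Wcons[OF c we] .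
      have eT2: "e \<notin> R (k-1) u2" using c_vT2 inR[OF wv] j1 by auto
      have ev1: "e \<noteq> v1"
      proof
        assume "e = v1"
        then have "W (Suc j) v1 v1" using wv by simp
        then show False by (rule nocyc) (use j1 k4 in auto)
      qed
      show ?thesis
      proof (cases "e = u")
        case True
        show ?thesis
        proof (rule ccontr)
          assume "\<not> ?thesis"
          then have le: "j + 3 \<le> k" using True by auto
          have w: "W (Suc (Suc (Suc j))) v u2" using Wcons[OF Av1 Wcons[OF c Wsnoc[OF we[unfolded True] Au2]]] .
          show False by (rule lenne[OF w W1I[OF Av2]]) (use le in auto)
        qed
      next
        case False
        then show ?thesis using c_Out[OF eV False eT1 eT2] ev1 by blast
      qed
    qed
    show ?thesis
    proof (cases "j = 1")
      case False
      then have j2: "2 \<le> j" using j1 by simp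
      have sub: "E \<subseteq> insert u (Out u - {v1})"
      proof
        fix e assume "e \<in> E"
        from Eprop[OF this] show "e \<in> insert u (Out u - {v1})" by blast
      qed
      have "card E \<le> card (insert u (Out u - {v1}))" by (rule card_mono) (simp_all add: finOut sub)
      also have "\<dots> \<le> Suc (card (Out u - {v1}))" by (simp add: card_insert_if finOut)
      also have "\<dots> = 3" using cOv by simp
      finally have "card E \<le> 3" .
      moreover have "(2::nat)^2 \<le> 2^j" by (rule power_increasing) (use j2 in simp_all)
      ultimately show ?thesis using cE by simp
    next
      case True
      have EO: "E \<subseteq> Out u - {v1}"
      proof
        fix e assume "e \<in> E"
        from Eprop[OF this] True k4 show "e \<in> Out u - {v1}" by auto
      qed
      have EN: "E = {y. A c y}" unfolding E_def True using arcV by auto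
      have "card E = card (Out u - {v1})" using cE True cOv by simp
      then have "E = Out u - {v1}" by (intro card_subset_eq[OF _ EO]) (simp add: finOut)
      then have O2: "Out u \<subseteq> insert v1 {y. A c y}" using EN by blast
      have EO': "{y. A c y} \<subseteq> Out u" using EO EN by blast
      define F where "F = {f. W 2 c f}"
      have cF: "card F = 4" unfolding F_def using lay_card[of 2 c] arcV c k4 by simp
      have Fsub: "F - {u} \<subseteq> Out u2"
      proof
        fix f assume fF: "f \<in> F - {u}"
        then have f2: "W 2 c f" and fu: "f \<noteq> u" unfolding F_def by auto
        obtain e' where e': "A c e'" "A e' f" using W2D[OF f2] by blast
        have fV: "f \<in> V" using arcV e' by blast
        have w3: "W (Suc 2) v1 f" using Wcons[OF c f2] .
        have fT2: "f \<notin> R (k-1) u2" using c_vT2 inR[OF w3] k4 by auto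
        have fv1: "f \<noteq> v1"
        proof
          assume "f = v1"
          then have "W (Suc 2) v1 v1" using w3 by simp
          then show False by (rule nocyc) (use k4 in auto)
        qed
        have fE: "\<not> A c f"
        proof
          assume "A c f"
          show False by (rule lenne[OF W1I[OF \<open>A c f\<close>] f2]) (use k4 in auto)
        qed
        have fO: "f \<notin> Out u" using O2 fv1 fE by blast
        have fT1: "f \<in> R (k-1) u1" using c_notOut[OF fV fO] fu fT2 by blast
        have "e' \<in> Out u" using EO' e'(1) by blast
        show "f \<in> Out u2" using c_ZT1[OF fT1 e'(2) \<open>e' \<in> Out u\<close>] .
      qed
      have Nsub: "{y. A v1 y} \<subseteq> Out u2" using chZ[OF D] by blast
      have disj: "(F - {u}) \<inter> {y. A v1 y} = {}"
      proof (rule ccontr)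
        assume "(F - {u}) \<inter> {y. A v1 y} \<noteq> {}"
        then obtain f where f: "f \<in> F" "A v1 f" by blast
        have w3: "W (Suc 2) v1 f" using Wcons[OF c] f(1) unfolding F_def by blast
        show False by (rule lenne[OF W1I[OF f(2)] w3]) (use k4 in auto)
      qed
      have finF: "finite F" unfolding F_def by (rule finW)
      have c1: "card (F - {u}) \<ge> 3" using cF by (simp add: card_Diff_singleton_if finF)
      have c2: "card {y. A v1 y} = 2" using outd[OF v1V] .
      have "card ((F - {u}) \<union> {y. A v1 y}) = card (F - {u}) + card {y. A v1 y}"
        by (rule card_Un_disjoint) (use finF finN disj in auto)
      moreover have "card ((F - {u}) \<union> {y. A v1 y}) \<le> 3"
        using card_mono[OF finOut, of "(F - {u}) \<union> {y. A v1 y}" u2] Fsub Nsub Out_card[OF u2V] by simp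
      ultimately show ?thesis using c1 c2 by simp
    qed
  qed
qed

end


context G begin
lemma OutIn_I: "x \<in> V \<Longrightarrow> y \<in> Out x \<Longrightarrow> x \<in> OutIn y"
  unfolding Out_def OutIn_def by blast

lemma other_in: "A a x \<Longrightarrow> \<exists>b. A b x \<and> b \<noteq> a"
proof -
  assume h: "A a x"
  have xV: "x \<in> V" using arcV h by blast
  obtain p q where pq: "p \<noteq> q" "{z. A z x} = {p, q}" using two_elems[OF ind[OF xV]] by blast
  show ?thesis
  proof (cases "p = a")
    case True then show ?thesis using pq by (intro exI[of _ q]) blast
  next
    case False then show ?thesis using pq by (intro exI[of _ p]) blast
  qed
qed

lemma other_out: "A x a \<Longrightarrow> \<exists>b. b \<noteq> a \<and> {y. A x y} = {b, a}"
proof -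
  assume h: "A x a"
  have xV: "x \<in> V" using arcV h by blast
  obtain p q where pq: "p \<noteq> q" "{z. A x z} = {p, q}" using two_elems[OF outd[OF xV]] by blast
  have "a = p \<or> a = q" using pq h by blast
  then show ?thesis
  proof
    assume "a = p" then show ?thesis using pq by (intro exI[of _ q]) blast
  next
    assume "a = q" then show ?thesis using pq by (intro exI[of _ p]) blast
  qed
qed
end

context cfg begin

lemma L3: "{y. A v1 y} \<inter> Out u = {} \<Longrightarrow> False"
proof -
  assume D: "{y. A v1 y} \<inter> Out u = {}"
  have v1O: "v1 \<in> Out u" by (rule L1)
  obtain c1 c2 where c: "c1 \<noteq> c2" "{y. A v1 y} = {c1, c2}" using two_elems[OF outd[OF v1V]] by blast
  have Ac1: "A v1 c1" and Ac2: "A v1 c2" using c by auto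
  have Kc1: "c1 = u1 \<or> A u1 c1" using K[OF D Ac1] .
  have Kc2: "c2 = u1 \<or> A u1 c2" using K[OF D Ac2] .
  have nu1: False if "A v1 u1" "A u1 c'" "A v1 c'" for c'
  proof -
    have w: "W (Suc (Suc 0)) v1 c'" using Wcons[OF that(1) W1I[OF that(2)]] by simp
    show False by (rule lenne[OF w W1I[OF that(3)]]) (use k4 in auto)
  qed
  have A1: "A u1 c1"
  proof (cases "c1 = u1")
    case True
    then have "A u1 c2" using Kc2 c(1) by auto
    then show ?thesis using nu1[OF Ac1[unfolded True] _ Ac2] by blast
  qed (use Kc1 in blast)
  have A2: "A u1 c2"
  proof (cases "c2 = u1")
    case True
    then have "A u1 c1" using Kc1 c(1) by auto
    then show ?thesis using nu1[OF Ac2[unfolded True] _ Ac1] by blast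
  qed (use Kc2 in blast)
  have Nu1: "{y. A u1 y} = {c1, c2}" using out_two[OF A1 A2 c(1)] .
  have NN: "A u1 y \<longleftrightarrow> A v1 y" for y
  proof -
    have "A u1 y \<longleftrightarrow> y \<in> {y. A u1 y}" by simp
    also have "\<dots> \<longleftrightarrow> y \<in> {y. A v1 y}" using Nu1 c(2) by simp
    finally show ?thesis by simp
  qed
  have vT1: "v \<notin> R (k-1) u1"
  proof
    assume "v \<in> R (k-1) u1"
    then obtain a where a: "a \<le> k-1" "W a u1 v" using RD by blast
    show False
    proof (cases a)
      case 0
      then have "v = u1" using a by simp
      then have "A v1 u2" using Av2 NN by simp
      then have "u2 \<in> R (k-1) v1" using inR[OF W1I] k4 by simp
      then show False using c_vT2 inR[OF u2W0] by blast
    next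
      case (Suc a')
      then obtain cc where cc: "A u1 cc" "W a' cc v" using a by auto
      have "W (Suc a') v1 v" using Wcons[OF cc(1)[unfolded NN] cc(2)] .
      then have "W (Suc (Suc a')) v v" using Wcons[OF Av1] by blast
      then show False by (rule nocyc) (use Suc a k4 in auto)
    qed
  qed
  have uTv1: "u \<notin> R (k-1) v1"
  proof
    assume "u \<in> R (k-1) v1"
    then obtain a where a: "a \<le> k-1" "W a v1 u" using RD by blast
    show False
    proof (cases a)
      case 0
      then have "v1 = u" using a by simp
      then show False using c_Out_not[OF v1O] by simp
    next
      case (Suc a')
      then obtain cc where cc: "A v1 cc" "W a' cc u" using a by auto
      have "W (Suc a') u1 u" using Wcons[OF cc(1)[folded NN] cc(2)] .
      then have "W (Suc (Suc a')) u u" using Wcons[OF Au1] by blast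
      then show False by (rule nocyc) (use Suc a k4 in auto)
    qed
  qed
  have u2Ou1: "u2 \<in> Out u1"
    unfolding Out_def
  proof (intro CollectI conjI notI)
    show "u2 \<in> V" by (rule u2V)
    assume "\<exists>i\<le>k. W i u1 u2"
    then obtain i where i: "i \<le> k" "W i u1 u2" by blast
    show False
    proof (cases i)
      case 0 then show False using i u12 by simp
    next
      case (Suc i')
      then obtain e where e: "W i' u1 e" "A e u2" using i Wsnoc_iff by blast
      have "e = u \<or> e = v" using in_u2[OF e(2)] .
      then show False
      proof
        assume eu: "e = u"
        have "W (Suc i') u1 u1" using Wsnoc[OF e(1)[unfolded eu] Au1] .
        then show False by (rule nocyc) (use Suc i in auto)
      next
        assume "e = v"
        then have "v \<in> R (k-1) u1" using inR[OF e(1)] Suc i by simp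
        then show False using vT1 by simp
      qed
    qed
  qed
  have u2Ov1: "u2 \<in> Out v1"
    unfolding Out_def
  proof (intro CollectI conjI notI)
    show "u2 \<in> V" by (rule u2V)
    assume "\<exists>i\<le>k. W i v1 u2"
    then obtain i where i: "i \<le> k" "W i v1 u2" by blast
    show False
    proof (cases i)
      case 0 then show False using i v12 by simp
    next
      case (Suc i')
      then obtain e where e: "W i' v1 e" "A e u2" using i Wsnoc_iff by blast
      have "e = u \<or> e = v" using in_u2[OF e(2)] .
      then show False
      proof
        assume ev: "e = v"
        have "W (Suc i') v1 v1" using Wsnoc[OF e(1)[unfolded ev] Av1] .
        then show False by (rule nocyc) (use Suc i in auto)
      next
        assume "e = u"
        then have "u \<in> R (k-1) v1" using inR[OF e(1)] Suc i by simp
        then show False using uTv1 by simp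
      qed
    qed
  qed
  obtain x0 where x0: "A x0 u1" "x0 \<noteq> u" using other_in[OF Au1] by blast
  obtain m where m: "m \<noteq> u1" "{y. A x0 y} = {m, u1}" using other_out[OF x0(1)] by blast
  have x0V: "x0 \<in> V" using arcV x0 by blast
  have mu2: "m \<noteq> u2"
  proof
    assume "m = u2"
    then have "A x0 u2" using m by blast
    then have "x0 = v" using in_u2 x0(2) by blast
    then have "A v u1" using x0 by simp
    then show False using Nv_cases u1v1 u12 by blast
  qed
  have cx: "cfg V A k x0 u m u1 u2"
    by (rule cfg.intro[OF G_axioms], rule cfg_axioms.intro) (use x0V uV x0 m mu2 Nu in auto)
  have u2x0: "u2 \<in> Out x0" using cfg.L1[OF cx] .
  obtain w where w: "A w v1" "w \<noteq> v" using other_in[OF Av1] by blast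
  obtain m' where m': "m' \<noteq> v1" "{y. A w y} = {m', v1}" using other_out[OF w(1)] by blast
  have wV: "w \<in> V" using arcV w by blast
  have mu2': "m' \<noteq> u2"
  proof
    assume "m' = u2"
    then have "A w u2" using m' by blast
    then have "w = u" using in_u2 w(2) by blast
    then have "A u v1" using w by simp
    then show False using Nu_cases u1v1 v12 by blast
  qed
  have cw: "cfg V A k w v m' v1 u2"
    by (rule cfg.intro[OF G_axioms], rule cfg_axioms.intro) (use wV vV w m' mu2' Nv in auto)
  have u2w: "u2 \<in> Out w" using cfg.L1[OF cw] .
  have sub: "{u1, v1, x0, w} \<subseteq> OutIn u2"
    using OutIn_I[OF u1V u2Ou1] OutIn_I[OF v1V u2Ov1] OutIn_I[OF x0V u2x0] OutIn_I[OF wV u2w] by blast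
  have d1: "x0 \<noteq> u1"
  proof
    assume "x0 = u1" then have "A u1 u1" using x0 by simp
    then show False using nocyc[OF W1I] k4 by auto
  qed
  have d2: "w \<noteq> v1"
  proof
    assume "w = v1" then have "A v1 v1" using w by simp
    then show False using nocyc[OF W1I] k4 by auto
  qed
  have d3: "x0 \<noteq> v1"
  proof
    assume "x0 = v1" then have "A u1 u1" using x0 NN by simp
    then show False using nocyc[OF W1I] k4 by auto
  qed
  have d4: "w \<noteq> u1"
  proof
    assume "w = u1" then have "A v1 v1" using w NN by simp
    then show False using nocyc[OF W1I] k4 by auto
  qed
  have d5: "x0 \<noteq> w"
  proof
    assume "x0 = w"
    then have "A x0 v1" using w by simp
    have "u1 = v1" by (rule geo_first[OF x0(1) \<open>A x0 v1\<close> W1I[OF A1] W1I[OF Ac1]]) (use k4 in auto)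
    then show False using u1v1 by simp
  qed
  have "card {u1, v1, x0, w} = 4" using d1 d2 d3 d4 d5 u1v1 by auto
  moreover have "card {u1, v1, x0, w} \<le> 3" using card_mono[OF finOutIn sub] OutIn_card[OF u2V] by simp
  ultimately show False by simp
qed

theorem main: "v1 \<in> Out u \<and> card (Out u \<inter> {y. A v1 y}) = 1"
proof -
  obtain c1 c2 where c: "c1 \<noteq> c2" "{y. A v1 y} = {c1, c2}" using two_elems[OF outd[OF v1V]] by blast
  have "card (Out u \<inter> {c1, c2}) = 1"
  proof (cases "c1 \<in> Out u")
    case True
    show ?thesis
    proof (cases "c2 \<in> Out u")
      case True
      then have "{y. A v1 y} \<subseteq> Out u" unfolding c(2) using \<open>c1 \<in> Out u\<close> by simp
      then show ?thesis using L2 by blast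
    next
      case False
      then have "Out u \<inter> {c1, c2} = {c1}" using True by blast
      then show ?thesis by simp
    qed
  next
    case False
    show ?thesis
    proof (cases "c2 \<in> Out u")
      case True
      then have "Out u \<inter> {c1, c2} = {c2}" using False by blast
      then show ?thesis by simp
    next
      case False
      then have "{y. A v1 y} \<inter> Out u = {}" unfolding c(2) using \<open>c1 \<notin> Out u\<close> by simp
      then show ?thesis using L3 by blast
    qed
  qed
  then show ?thesis using L1 c by simp
qed

end


lemma kgD: "k_geodetic V A k \<Longrightarrow> x \<in> V \<Longrightarrow> y \<in> V \<Longrightarrow> is_path V A p x y \<Longrightarrow> path_len p \<le> k
  \<Longrightarrow> is_path V A q x y \<Longrightarrow> path_len q \<le> k \<Longrightarrow> p = q"
  unfolding k_geodetic_def by blast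

lemma geo_to_len:
  assumes kg: "k_geodetic V A k" and "wlk V A m x y" "wlk V A n x y" "m \<le> k" "n \<le> k"
  shows "m = n"
proof -
  obtain p where p: "is_path V A p x y" "path_len p = m" using wlk_path[OF assms(2)] by blast
  obtain q where q: "is_path V A q x y" "path_len q = n" using wlk_path[OF assms(3)] by blast
  have xy: "x \<in> V" "y \<in> V" using wlk_V[OF assms(2)] by blast+
  have "path_len p \<le> k" "path_len q \<le> k" using p(2) q(2) assms(4,5) by simp_all
  then have "p = q" using kgD[OF kg xy(1) xy(2) p(1) _ q(1)] by blast
  then show ?thesis using p q by simp
qed

lemma geo_to_first:
  assumes kg: "k_geodetic V A k" and xV: "x \<in> V"
    and h: "A x a" "A x b" "wlk V A m a y" "wlk V A n b y" "m < k" "n < k"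
  shows "a = b"
proof -
  obtain p where p: "is_path V A p a y" "path_len p = m" using wlk_path[OF h(3)] by blast
  obtain q where q: "is_path V A q b y" "path_len q = n" using wlk_path[OF h(4)] by blast
  obtain p' where p': "p = a # p'" using p(1) unfolding is_path_def by (cases p) auto
  obtain q' where q': "q = b # q'" using q(1) unfolding is_path_def by (cases q) auto
  have yV: "y \<in> V" using wlk_V[OF h(3)] by blast
  have P: "is_path V A (x # p) x y" using p(1) p' xV h(1) by (simp add: is_path_Cons2)
  have Q: "is_path V A (x # q) x y" using q(1) q' xV h(2) by (simp add: is_path_Cons2)
  have "path_len (x # p) = Suc m" using p(2) p' unfolding path_len_def by simp
  moreover have "path_len (x # q) = Suc n" using q(2) q' unfolding path_len_def by simp
  ultimately have "path_len (x # p) \<le> k" "path_len (x # q) \<le> k" using h(5,6) by simp_all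
  then have "x # p = x # q" using kgD[OF kg xV yV P _ Q] by simp
  then show ?thesis using p' q' by simp
qed

lemma geo_to_last:
  assumes kg: "k_geodetic V A k" and yV: "y \<in> V"
    and h: "A a y" "A b y" "wlk V A m x a" "wlk V A n x b" "m < k" "n < k"
  shows "a = b"
proof -
  obtain p where p: "is_path V A p x a" "path_len p = m" using wlk_path[OF h(3)] by blast
  obtain q where q: "is_path V A q x b" "path_len q = n" using wlk_path[OF h(4)] by blast
  have xV: "x \<in> V" using wlk_V[OF h(3)] by blast
  have P: "is_path V A (p @ [y]) x y" using path_snoc[OF p(1) h(1) yV] .
  have Q: "is_path V A (q @ [y]) x y" using path_snoc[OF q(1) h(2) yV] .
  have pne: "p \<noteq> []" using p(1) unfolding is_path_def by blast
  have qne: "q \<noteq> []" using q(1) unfolding is_path_def by blast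
  have "path_len (p @ [y]) = Suc m" using pne p(2) unfolding path_len_def by (cases p) auto
  moreover have "path_len (q @ [y]) = Suc n" using qne q(2) unfolding path_len_def by (cases q) auto
  ultimately have "path_len (p @ [y]) \<le> k" "path_len (q @ [y]) \<le> k" using h(5,6) by simp_all
  then have "p @ [y] = q @ [y]" using kgD[OF kg xV yV P _ Q] by simp
  then have "p = q" by simp
  have "last p = a" using p(1) unfolding is_path_def by blast
  moreover have "last q = b" using q(1) unfolding is_path_def by blast
  ultimately show ?thesis using \<open>p = q\<close> by simp
qed

lemma to_G: "diregular_2k3 V A k \<Longrightarrow> 4 \<le> k \<Longrightarrow> G V A k"
proof -
  assume d: "diregular_2k3 V A k" and k4: "4 \<le> k"
  have dd: "finite V \<and>
     (\<forall>x y. A x y \<longrightarrow> x \<in> V \<and> y \<in> V) \<and>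
     (\<forall>x\<in>V. card (out_nbrs A x) = 2 \<and> card (in_nbrs A x) = 2) \<and>
     k_geodetic V A k \<and>
     card V = (\<Sum>i\<le>k. 2 ^ i) + 3" using d unfolding diregular_2k3_def .
  have arcV: "\<And>x y. A x y \<Longrightarrow> x \<in> V \<and> y \<in> V" using dd by blast
  have kg: "k_geodetic V A k" using dd by blast
  show ?thesis
  proof
    show "finite V" using dd by blast
    show "\<And>x y. A x y \<Longrightarrow> x \<in> V \<and> y \<in> V" by (rule arcV)
    fix x assume xV: "x \<in> V"
    have cc: "card (out_nbrs A x) = 2 \<and> card (in_nbrs A x) = 2" using dd xV by blast
    show "card {y. A x y} = 2" using cc unfolding out_nbrs_def by simp
    show "card {y. A y x} = 2" using cc unfolding in_nbrs_def by simp
  next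
    show "card V = (\<Sum>i\<le>k. 2^i) + 3" using dd by blast
    show "4 \<le> k" by (rule k4)
  next
    fix m n x y assume "wlk V A m x y" "wlk V A n x y" "m \<le> k" "n \<le> k"
    then show "m = n" by (rule geo_to_len[OF kg])
  next
    fix x a b m n y assume h: "A x a" "A x b" "wlk V A m a y" "wlk V A n b y" "m < k" "n < k"
    have "x \<in> V" using arcV h(1) by blast
    then show "a = b" using geo_to_first[OF kg _ h] by blast
  next
    fix x a b m n y assume h: "A a y" "A b y" "wlk V A m x a" "wlk V A n x b" "m < k" "n < k"
    have "y \<in> V" using arcV h(1) by blast
    then show "a = b" using geo_to_last[OF kg _ h] by blast
  qed
qed

lemma dist_ge: "enat (k + 1) \<le> dist V A x y \<longleftrightarrow> \<not> (\<exists>i\<le>k. wlk V A i x y)"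
proof (cases "\<exists>p. is_path V A p x y")
  case False
  have "\<not> (\<exists>i\<le>k. wlk V A i x y)"
  proof
    assume "\<exists>i\<le>k. wlk V A i x y"
    then obtain i where "wlk V A i x y" by blast
    from wlk_path[OF this] show False using False by blast
  qed
  moreover have "dist V A x y = \<infinity>" unfolding dist_def by (rule if_not_P[OF False])
  ultimately show ?thesis by simp
next
  case True
  define L where "L = (LEAST n. \<exists>p. is_path V A p x y \<and> path_len p = n)"
  have dL: "dist V A x y = enat L" unfolding dist_def L_def by (rule if_P[OF True])
  have ex0: "\<exists>n. \<exists>p. is_path V A p x y \<and> path_len p = n" using True by blast
  have ex: "\<exists>p. is_path V A p x y \<and> path_len p = L"
    unfolding L_def using LeastI_ex[of "\<lambda>n. \<exists>p. is_path V A p x y \<and> path_len p = n", OF ex0] .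
  have le: "\<And>n. (\<exists>p. is_path V A p x y \<and> path_len p = n) \<Longrightarrow> L \<le> n"
    unfolding L_def by (rule Least_le[of "\<lambda>n. \<exists>p. is_path V A p x y \<and> path_len p = n"])
  show ?thesis
  proof
    assume "enat (k + 1) \<le> dist V A x y"
    then have kL: "k + 1 \<le> L" using dL by simp
    show "\<not> (\<exists>i\<le>k. wlk V A i x y)"
    proof
      assume "\<exists>i\<le>k. wlk V A i x y"
      then obtain i where i: "i \<le> k" "wlk V A i x y" by blast
      obtain p where "is_path V A p x y" "path_len p = i" using wlk_path[OF i(2)] by blast
      then have "L \<le> i" using le by blast
      then show False using kL i by simp
    qed
  next
    assume n: "\<not> (\<exists>i\<le>k. wlk V A i x y)"
    obtain p where p: "is_path V A p x y" "path_len p = L" using ex by blast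
    have "wlk V A L x y" using path_wlk[OF p(1)] p(2) by simp
    then have "\<not> L \<le> k" using n by blast
    then have "k + 1 \<le> L" by simp
    then show "enat (k + 1) \<le> dist V A x y" using dL by simp
  qed
qed

lemma (in G) outlier_eq: "outlier_set V A k x = Out x"
proof (rule set_eqI)
  fix y
  show "y \<in> outlier_set V A k x \<longleftrightarrow> y \<in> Out x"
    unfolding outlier_set_def Out_def mem_Collect_eq using dist_ge[of k V A x y] by simp
qed

theorem corollary4:
  fixes V :: "'a set" and A :: "'a \<Rightarrow> 'a \<Rightarrow> bool" and k :: nat and u v u1 u2 v1 :: 'a
  assumes "k \<ge> 4"
    and "diregular_2k3 V A k"
    and "u \<in> V" and "v \<in> V" and "u \<noteq> v"
    and "out_nbrs A u \<inter> out_nbrs A v = {u2}"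
    and "out_nbrs A u = {u1, u2}"
    and "out_nbrs A v = {v1, u2}"
  shows "v1 \<in> outlier_set V A k u \<and> u1 \<in> outlier_set V A k v \<and>
         card (outlier_set V A k u \<inter> out_nbrs A v1) = 1 \<and>
         card (outlier_set V A k v \<inter> out_nbrs A u1) = 1"
proof -
  have g: "G V A k" using to_G assms(1,2) by blast
  have Nu: "{y. A u y} = {u1, u2}" using assms(7) unfolding out_nbrs_def .
  have Nv: "{y. A v y} = {v1, u2}" using assms(8) unfolding out_nbrs_def .
  have u12: "u1 \<noteq> u2"
  proof
    assume "u1 = u2" then have "card {y. A u y} = 1" using Nu by simp
    then show False using G.outd[OF g assms(3)] by simp
  qed
  have u1v1: "u1 \<noteq> v1"
  proof
    assume e: "u1 = v1"
    have "u1 \<in> out_nbrs A u \<inter> out_nbrs A v" using assms(7,8) e by blast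
    then show False using assms(6) u12 by blast
  qed
  have c1: "cfg V A k u v u1 u2 v1"
    by (rule cfg.intro[OF g], rule cfg_axioms.intro) (use assms(3,4,5) Nu Nv u1v1 in auto)
  have c2: "cfg V A k v u v1 u2 u1"
    by (rule cfg.intro[OF g], rule cfg_axioms.intro) (use assms(3,4,5) Nu Nv u1v1 in auto)
  have m1: "v1 \<in> G.Out V A k u \<and> card (G.Out V A k u \<inter> {y. A v1 y}) = 1" using cfg.main[OF c1] .
  have m2: "u1 \<in> G.Out V A k v \<and> card (G.Out V A k v \<inter> {y. A u1 y}) = 1" using cfg.main[OF c2] .
  show ?thesis using m1 m2 unfolding G.outlier_eq[OF g] out_nbrs_def by simp
qed


end
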